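(* Let $n\ge 3$ and consider the Majority Model (MM) on the cycle $C_n$ with a coloring $\mathcal{C}$ in which there exist two adjacent nodes with the same color. Then, starting from $\mathcal{C}$, the process reaches a stable coloring after exactly $\lceil l/2\rceil$ rounds, where $l$ is the length of the longest alternating path in the path partition of $\mathcal{C}$.
   Context: A coloring of a graph is a map from its nodes to $\{b,w\}$ (blue/white). In the Majority Model (MM), all nodes update simultaneously in each round: a node adopts the color strictly more frequent among its neighbors in the previous round, and keeps its current color in case of a tie. A coloring is stable if one application of the update rule returns the same coloring. On a cycle, a path is monochromatic if all its nodes have the same color, and alternating if every two adjacent nodes on it have opposite colors; the length of a path is its number of nodes. Path partition: let $B$ (resp. $W$) be the set of nodes lying on maximal blue (resp. white) paths of length at least two in $\mathcal{C}$; the nodes not in $B\cup W$ are partitioned into maximal alternating paths (lying between such monochromatic paths). The path partition consists of these maximal monochromatic paths of length at least two and these maximal alternating paths (take $l=0$ if there are no alternating paths). *)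

theory Defs
  imports Complex_Main
begin

datatype color = Blue | White

text \<open>The cycle C_n has nodes 0..n-1; node i is adjacent to (i+1) mod n and (i+n-1) mod n.
  A coloring is a function nat => color; only its values on 0..n-1 matter.\<close>

definition cyc_nbrs :: "nat \<Rightarrow> nat \<Rightarrow> nat set" where
  "cyc_nbrs n i = {(i + 1) mod n, (i + n - 1) mod n}"

definition mm_step :: "nat \<Rightarrow> (nat \<Rightarrow> color) \<Rightarrow> (nat \<Rightarrow> color)" where
  "mm_step n c i =
     (let b = card {j \<in> cyc_nbrs n i. c j = Blue};
          w = card {j \<in> cyc_nbrs n i. c j = White}
      in if b > w then Blue else if w > b then White else c i)"

definition mm_stable :: "nat \<Rightarrow> (nat \<Rightarrow> color) \<Rightarrow> bool" where
  "mm_stable n c \<longleftrightarrow> (\<forall>i<n. mm_step n c i = c i)"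

text \<open>Node i lies on a maximal monochromatic path of length at least two (i.e. in B \<union> W)
  iff it has a neighbour of its own colour.\<close>
definition in_mono :: "nat \<Rightarrow> (nat \<Rightarrow> color) \<Rightarrow> nat \<Rightarrow> bool" where
  "in_mono n c i \<longleftrightarrow> (\<exists>j \<in> cyc_nbrs n i. c j = c i)"

definition max_alt_path :: "nat \<Rightarrow> (nat \<Rightarrow> color) \<Rightarrow> nat \<Rightarrow> nat \<Rightarrow> bool" where
  "max_alt_path n c i k \<longleftrightarrow> i < n \<and> 1 \<le> k \<and> k < n \<and>
     (\<forall>j<k. \<not> in_mono n c ((i + j) mod n)) \<and>
     in_mono n c ((i + n - 1) mod n) \<and> in_mono n c ((i + k) mod n)"

definition longest_alt :: "nat \<Rightarrow> (nat \<Rightarrow> color) \<Rightarrow> nat" where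
  "longest_alt n c = Max ({0} \<union> {k. \<exists>i. max_alt_path n c i k})"

end

theory Submission imports Defs begin
lemma nb_ne: "i < n \<Longrightarrow> 3 \<le> (n::nat) \<Longrightarrow> (i+1) mod n \<noteq> (i+n-1) mod n"
  by (cases "i = 0"; cases "i = n - 1"; auto simp add: mod_if)
lemma modm1: "0 < (n::nat) \<Longrightarrow> (x mod n + n - 1) mod n = (x + n - 1) mod n"
  by (metis Nat.add_diff_assoc One_nat_def Suc_leI mod_add_left_eq)
lemma card2: "a \<noteq> b \<Longrightarrow> card {j \<in> {a,b}. P j} = (if P a then 1 else 0) + (if P b then 1 else (0::nat))"
proof (cases "P a"; cases "P b")
  assume "a \<noteq> b" "P a" "P b" then have "{j \<in> {a,b}. P j} = {a,b}" by auto
  then show ?thesis using \<open>a \<noteq> b\<close> \<open>P a\<close> \<open>P b\<close> by simp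
next
  assume "a \<noteq> b" "P a" "\<not> P b" then have "{j \<in> {a,b}. P j} = {a}" by auto
  then show ?thesis using \<open>P a\<close> \<open>\<not> P b\<close> by simp
next
  assume "a \<noteq> b" "\<not> P a" "P b" then have "{j \<in> {a,b}. P j} = {b}" by auto
  then show ?thesis using \<open>\<not> P a\<close> \<open>P b\<close> by simp
next
  assume "a \<noteq> b" "\<not> P a" "\<not> P b" then have "{j \<in> {a,b}. P j} = {}" by auto
  then show ?thesis using \<open>\<not> P a\<close> \<open>\<not> P b\<close> by simp
qed
lemma step_val:
  assumes "n \<ge> 3"
  shows "mm_step n c (x mod n) = (if c ((x+1) mod n) = c ((x+n-1) mod n) then c ((x+1) mod n) else c (x mod n))"
proof -
  have n0: "0 < n" using assms by simp
  have nb: "cyc_nbrs n (x mod n) = {(x+1) mod n, (x+n-1) mod n}"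
    unfolding cyc_nbrs_def using modm1[OF n0] by (simp add: mod_Suc_eq)
  have ne: "(x+1) mod n \<noteq> (x+n-1) mod n"
    using nb_ne[of "x mod n" n] assms n0 modm1[OF n0] by (simp add: mod_Suc_eq)
  show ?thesis unfolding mm_step_def nb Let_def card2[OF ne]
    by (cases "c ((x+1) mod n)"; cases "c ((x+n-1) mod n)"; simp)
qed
lemma mono_iff:
  assumes "n \<ge> 3"
  shows "in_mono n c (x mod n) \<longleftrightarrow> c ((x+1) mod n) = c (x mod n) \<or> c ((x+n-1) mod n) = c (x mod n)"
proof -
  have n0: "0 < n" using assms by simp
  have nb: "cyc_nbrs n (x mod n) = {(x+1) mod n, (x+n-1) mod n}"
    unfolding cyc_nbrs_def using modm1[OF n0] by (simp add: mod_Suc_eq)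
  show ?thesis unfolding in_mono_def nb by auto
qed

lemma col_cases: "(x::color) \<noteq> y \<longleftrightarrow> (x = Blue \<and> y = White) \<or> (x = White \<and> y = Blue)"
  by (cases x; cases y; simp)

lemma step_mono:
  assumes "n \<ge> 3"
  shows "\<not> in_mono n (mm_step n c) (x mod n) \<longleftrightarrow>
     \<not> in_mono n c (x mod n) \<and> \<not> in_mono n c ((x+1) mod n) \<and> \<not> in_mono n c ((x+n-1) mod n)"
proof -
  have n0: "0 < n" using assms by simp
  have e1: "(x + 1 + n - 1) mod n = x mod n" by simp
  have e2: "(x + n - 1 + 1) mod n = x mod n" using n0 by simp
  have e3: "(x + 1 + 1) mod n = (x+2) mod n" by simp
  define A where "A = c ((x + n - 1 + n - 1) mod n)"
  define B where "B = c ((x + n - 1) mod n)"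
  define C where "C = c (x mod n)"
  define D where "D = c ((x + 1) mod n)"
  define E where "E = c ((x + 2) mod n)"
  show ?thesis
    unfolding mono_iff[OF assms, of "mm_step n c"] mono_iff[OF assms, of c]
      mono_iff[OF assms, of c "x+1"] mono_iff[OF assms, of c "x+n-1"]
      step_val[OF assms, of c "x+1"] step_val[OF assms, of c "x+n-1"] step_val[OF assms, of c x]
      e1 e2 e3 A_def[symmetric] B_def[symmetric] C_def[symmetric] D_def[symmetric] E_def[symmetric]
    by (cases A; cases B; cases C; cases D; cases E; simp)
qed

definition PP :: "nat \<Rightarrow> (nat \<Rightarrow> color) \<Rightarrow> nat \<Rightarrow> nat \<Rightarrow> bool" where
  "PP n c t x \<longleftrightarrow> \<not> in_mono n ((mm_step n ^^ t) c) (x mod n)"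

lemma PP_per: "PP n c t (x + n) = PP n c t x"
  unfolding PP_def by simp

lemma PP_step:
  assumes "n \<ge> 3"
  shows "PP n c (Suc t) x \<longleftrightarrow> PP n c t x \<and> PP n c t (x+1) \<and> PP n c t (x+n-1)"
  unfolding PP_def using step_mono[OF assms, of "(mm_step n ^^ t) c" x] by simp

lemma window:
  assumes "n \<ge> 3"
  shows "PP n c t (x+t) \<longleftrightarrow> (\<forall>j\<le>2*t. PP n c 0 (x+j))"
proof (induction t arbitrary: x)
  case 0
  then show ?case by simp
next
  case (Suc t)
  have e: "x + Suc t + n - 1 = (x + t) + n" using assms by simp
  have "PP n c (Suc t) (x + Suc t) \<longleftrightarrow> PP n c t ((x+1) + t) \<and> PP n c t ((x+2)+t) \<and> PP n c t (x+t)"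
    unfolding PP_step[OF assms] e PP_per by (simp add: ac_simps)
  also have "\<dots> \<longleftrightarrow> (\<forall>j\<le>2*t. PP n c 0 (x+1+j)) \<and> (\<forall>j\<le>2*t. PP n c 0 (x+2+j)) \<and> (\<forall>j\<le>2*t. PP n c 0 (x+j))"
    using Suc.IH by blast
  also have "\<dots> \<longleftrightarrow> (\<forall>j\<le>2*Suc t. PP n c 0 (x+j))"
  proof
    assume h: "(\<forall>j\<le>2*t. PP n c 0 (x+1+j)) \<and> (\<forall>j\<le>2*t. PP n c 0 (x+2+j)) \<and> (\<forall>j\<le>2*t. PP n c 0 (x+j))"
    show "\<forall>j\<le>2*Suc t. PP n c 0 (x+j)"
    proof (intro allI impI)
      fix j assume j: "j \<le> 2 * Suc t"
      show "PP n c 0 (x+j)"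
      proof (cases "j \<ge> 2")
        case True
        then have e: "x + j = x + 2 + (j - 2)" by simp
        have "j - 2 \<le> 2 * t" using j by simp
        then have "PP n c 0 (x + 2 + (j - 2))" using h by blast
        then show ?thesis unfolding e .
      next
        case False
        then have "j = 0 \<or> j = 1" by auto
        moreover have "PP n c 0 (x+0)" using h by blast
        moreover have "PP n c 0 (x+1+0)" using h by blast
        ultimately show ?thesis by (metis add.right_neutral)
      qed
    qed
  next
    assume h: "\<forall>j\<le>2*Suc t. PP n c 0 (x+j)"
    show "(\<forall>j\<le>2*t. PP n c 0 (x+1+j)) \<and> (\<forall>j\<le>2*t. PP n c 0 (x+2+j)) \<and> (\<forall>j\<le>2*t. PP n c 0 (x+j))"
    proof (intro conjI)
      show "\<forall>j\<le>2*t. PP n c 0 (x+1+j)"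
      proof (intro allI impI)
        fix j assume a: "j \<le> 2*t"
        have "1+j \<le> 2 * Suc t" using a by simp
        then have "PP n c 0 (x+(1+j))" using h by blast
        then show "PP n c 0 (x+1+j)" by (simp only: add.assoc)
      qed
      show "\<forall>j\<le>2*t. PP n c 0 (x+2+j)"
      proof (intro allI impI)
        fix j assume a: "j \<le> 2*t"
        have "2+j \<le> 2 * Suc t" using a by simp
        then have "PP n c 0 (x+(2+j))" using h by blast
        then show "PP n c 0 (x+2+j)" by (simp only: add.assoc)
      qed
      show "\<forall>j\<le>2*t. PP n c 0 (x+j)" using h by simp
    qed
  qed
  finally show ?case .
qed

lemma stable_iff:
  assumes "n \<ge> 3"
  shows "mm_stable n c \<longleftrightarrow> (\<forall>i<n. in_mono n c i)"
proof -
  have "mm_step n c i = c i \<longleftrightarrow> in_mono n c i" if "i < n" for i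
    using step_val[OF assms, of c i] mono_iff[OF assms, of c i] that
    by (cases "c i"; cases "c ((i+1) mod n)"; cases "c ((i+n-1) mod n)"; simp)
  then show ?thesis unfolding mm_stable_def by blast
qed

lemma stable_t:
  assumes "n \<ge> 3"
  shows "mm_stable n ((mm_step n ^^ t) c) \<longleftrightarrow> \<not> (\<exists>x. \<forall>j\<le>2*t. PP n c 0 (x+j))"
proof -
  have n0: "0 < n" using assms by simp
  have "mm_stable n ((mm_step n ^^ t) c) \<longleftrightarrow> (\<forall>y. \<not> PP n c t y)"
    unfolding stable_iff[OF assms] PP_def
    by (metis mod_less mod_less_divisor n0)
  also have "\<dots> \<longleftrightarrow> (\<forall>x. \<not> PP n c t (x + t))"
  proof
    assume h: "\<forall>x. \<not> PP n c t (x + t)"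
    show "\<forall>y. \<not> PP n c t y"
    proof
      fix y
      have "t \<le> n * t" using n0 by simp
      then have "y + n * t - t + t = y + n * t" by linarith
      moreover have "PP n c t (y + n*t) = PP n c t y" unfolding PP_def by simp
      ultimately show "\<not> PP n c t y" using h[rule_format, of "y + n*t - t"] by simp
    qed
  qed blast
  also have "\<dots> \<longleftrightarrow> \<not> (\<exists>x. \<forall>j\<le>2*t. PP n c 0 (x+j))"
    using window[OF assms] by blast
  finally show ?thesis .
qed

lemma PP0: "PP n c 0 x \<longleftrightarrow> \<not> in_mono n c (x mod n)"
  unfolding PP_def by simp

lemma norun:
  assumes "n \<ge> 3" "i0 < n" "in_mono n c i0"
  shows "\<not> (\<forall>j<n. PP n c 0 (x+j))"
proof
  assume h: "\<forall>j<n. PP n c 0 (x+j)"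
  have n0: "0 < n" using assms by simp
  define j where "j = (i0 + n - x mod n) mod n"
  have jn: "j < n" unfolding j_def using n0 by simp
  have "(x + j) mod n = (x mod n + j mod n) mod n" by (simp add: mod_add_eq)
  also have "\<dots> = (x mod n + (i0 + n - x mod n)) mod n" unfolding j_def
    by (simp add: mod_add_right_eq)
  also have "x mod n + (i0 + n - x mod n) = i0 + n"
    using mod_less_divisor[OF n0, of x] by linarith
  finally have "(x + j) mod n = i0" using assms by simp
  then show False using h jn assms(3) unfolding PP0 by auto
qed

lemma fin_alt: "finite {k. \<exists>i. max_alt_path n c i k}"
proof (rule finite_subset)
  show "{k. \<exists>i. max_alt_path n c i k} \<subseteq> {..<n}" unfolding max_alt_path_def by auto
qed simp

lemma run_iff:
  assumes n3: "n \<ge> 3" and i0: "i0 < n" "in_mono n c i0" and m1: "1 \<le> m"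
  shows "(\<exists>x. \<forall>j<m. PP n c 0 (x+j)) \<longleftrightarrow> m \<le> longest_alt n c"
proof
  assume "m \<le> longest_alt n c"
  let ?S = "{0} \<union> {k. \<exists>i. max_alt_path n c i k}"
  have "longest_alt n c \<in> ?S" unfolding longest_alt_def
    by (rule Max_in) (use fin_alt in auto)
  moreover have "longest_alt n c \<noteq> 0" using \<open>m \<le> longest_alt n c\<close> m1 by simp
  ultimately obtain i where "max_alt_path n c i (longest_alt n c)" by auto
  then have "\<forall>j<longest_alt n c. PP n c 0 (i+j)" unfolding max_alt_path_def PP0 by auto
  then have "\<forall>j<m. PP n c 0 (i+j)" using \<open>m \<le> longest_alt n c\<close> by simp
  then show "\<exists>x. \<forall>j<m. PP n c 0 (x+j)" by blast
next
  assume "\<exists>x. \<forall>j<m. PP n c 0 (x+j)"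
  have n0: "0 < n" using n3 by simp
  define R where "R = {k. k < n \<and> (\<exists>x. \<forall>j<k. PP n c 0 (x+j))}"
  have finR: "finite R" unfolding R_def by auto
  have mn: "m < n"
  proof (rule ccontr)
    assume "\<not> m < n"
    obtain x where x: "\<forall>j<m. PP n c 0 (x+j)" using \<open>\<exists>x. \<forall>j<m. PP n c 0 (x+j)\<close> by blast
    have "\<forall>j<n. PP n c 0 (x+j)" using x \<open>\<not> m < n\<close> by simp
    then show False using norun[OF n3 i0, of x] by blast
  qed
  have mR: "m \<in> R" unfolding R_def using mn \<open>\<exists>x. \<forall>j<m. PP n c 0 (x+j)\<close> by auto
  define k where "k = Max R"
  have kR: "k \<in> R" unfolding k_def using finR mR by (intro Max_in) auto
  have mk: "m \<le> k" unfolding k_def using finR mR by simp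
  obtain x where kn: "k < n" and x: "\<forall>j<k. PP n c 0 (x+j)" using kR unfolding R_def by auto
  have nolonger: False if "\<forall>j<Suc k. PP n c 0 (y+j)" for y
  proof -
    have "Suc k \<noteq> n" using that norun[OF n3 i0, of y] by auto
    then have "Suc k \<in> R" using kn that unfolding R_def by auto
    then have "Suc k \<le> k" unfolding k_def using finR by simp
    then show False by simp
  qed
  have "max_alt_path n c (x mod n) k"
    unfolding max_alt_path_def
  proof (intro conjI allI impI)
    show "x mod n < n" using n0 by simp
    show "1 \<le> k" using mk m1 by simp
    show "k < n" by fact
    fix j assume "j < k"
    then show "\<not> in_mono n c ((x mod n + j) mod n)" using x unfolding PP0 by (simp add: mod_add_left_eq)
  next
    show "in_mono n c ((x mod n + n - 1) mod n)"
    proof (rule ccontr)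
      assume a: "\<not> in_mono n c ((x mod n + n - 1) mod n)"
      have "\<forall>j<Suc k. PP n c 0 (x + n - 1 + j)"
      proof (intro allI impI)
        fix j assume "j < Suc k"
        show "PP n c 0 (x + n - 1 + j)"
        proof (cases j)
          case 0 then show ?thesis using a modm1[OF n0, of x] unfolding PP0 by simp
        next
          case (Suc j')
          then have "x + n - 1 + j = (x + j') + n" using n0 by simp
          moreover have "PP n c 0 (x + j')" using x Suc \<open>j < Suc k\<close> by simp
          ultimately show ?thesis using PP_per by metis
        qed
      qed
      then show False using nolonger by blast
    qed
  next
    show "in_mono n c ((x mod n + k) mod n)"
    proof (rule ccontr)
      assume a: "\<not> in_mono n c ((x mod n + k) mod n)"
      have "\<forall>j<Suc k. PP n c 0 (x + j)"
      proof (intro allI impI)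
        fix j assume "j < Suc k"
        then consider "j < k" | "j = k" by linarith
        then show "PP n c 0 (x + j)"
        proof cases
          case 1 then show ?thesis using x by simp
        next
          case 2 then show ?thesis using a unfolding PP0 by (simp add: mod_add_left_eq)
        qed
      qed
      then show False using nolonger by blast
    qed
  qed
  then have "k \<le> longest_alt n c" unfolding longest_alt_def
    using fin_alt by (intro Max_ge) auto
  then show "m \<le> longest_alt n c" using mk by simp
qed

lemma ceil_half: "nat \<lceil>real L / 2\<rceil> = (L + 1) div 2"
proof -
  have "\<lceil>real L / 2\<rceil> = int ((L + 1) div 2)"
  proof (rule ceiling_unique)
    show "real L / 2 \<le> real_of_int (int ((L + 1) div 2))" by linarith
    show "real_of_int (int ((L + 1) div 2)) - 1 < real L / 2" by linarith
  qed
  then show ?thesis by simp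
qed

theorem lemma2p2:
  fixes n :: nat and c :: "nat \<Rightarrow> color"
  assumes "n \<ge> 3"
    and "\<exists>i<n. c i = c ((i + 1) mod n)"
  shows "mm_stable n ((mm_step n ^^ nat \<lceil>real (longest_alt n c) / 2\<rceil>) c) \<and>
         (\<forall>t < nat \<lceil>real (longest_alt n c) / 2\<rceil>. \<not> mm_stable n ((mm_step n ^^ t) c))"
proof -
  obtain i0 where i0: "i0 < n" "c i0 = c ((i0 + 1) mod n)" using assms(2) by blast
  have m0: "in_mono n c i0" unfolding in_mono_def cyc_nbrs_def using i0 by auto
  have key: "mm_stable n ((mm_step n ^^ t) c) \<longleftrightarrow> longest_alt n c \<le> 2 * t" for t
  proof -
    have "(\<exists>x. \<forall>j\<le>2*t. PP n c 0 (x+j)) \<longleftrightarrow> (\<exists>x. \<forall>j<Suc (2*t). PP n c 0 (x+j))"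
      by (simp add: less_Suc_eq_le)
    also have "\<dots> \<longleftrightarrow> Suc (2*t) \<le> longest_alt n c"
      by (rule run_iff[OF assms(1) i0(1) m0]) simp
    finally have e: "(\<exists>x. \<forall>j\<le>2*t. PP n c 0 (x+j)) \<longleftrightarrow> Suc (2*t) \<le> longest_alt n c" .
    have "\<not> (Suc (2*t) \<le> longest_alt n c) \<longleftrightarrow> longest_alt n c \<le> 2 * t" by linarith
    then show ?thesis unfolding stable_t[OF assms(1)] e .
  qed
  show ?thesis unfolding ceil_half key by auto
qed
end
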